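(* Let $z\in\mathbb{R}^n$ satisfy $\dim\big(\Diamond_n\cap(z+\Diamond_n)\big)=n$. Then there exists $\epsilon>0$ such that $\mathcal{N}\big(\Diamond_n\cap(\lambda z+\Diamond_n)\big)=\mathcal{N}\big(\Diamond_n\cap(z+\Diamond_n)\big)$ for all $\lambda\in(1-\epsilon,1+\epsilon)$.
   Context: $\Diamond_n=\operatorname{conv}(\pm e_1,\ldots,\pm e_n)\subset\mathbb{R}^n$. For an $n$-dimensional polytope $P\subset\mathbb{R}^n$, its normal fan $\mathcal{N}(P)$ is the fan whose maximal cones are $(\mathbb{R}_+(P-v))^{\circ}$ for $v$ ranging over the vertices of $P$, where $\mathbb{R}_+X$ is the set of nonnegative linear combinations of elements of $X$ and $C^{\circ}=\{x:x\cdot y\ge0\text{ for all }y\in C\}$. *)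

theory Defs
  imports "HOL-Analysis.Analysis"
begin

definition cross_polytope :: "'a::euclidean_space set" where
  "cross_polytope = convex hull (Basis \<union> uminus ` Basis)"

definition dual_cone :: "'a::euclidean_space set \<Rightarrow> 'a set" where
  "dual_cone C = {x. \<forall>y\<in>C. x \<bullet> y \<ge> 0}"

definition normal_fan_max_cones :: "'a::euclidean_space set \<Rightarrow> 'a set set" where
  "normal_fan_max_cones P =
     {dual_cone (convex_cone hull ((\<lambda>x. x - v) ` P)) | v. v extreme_point_of P}"

definition normal_fan :: "'a::euclidean_space set \<Rightarrow> 'a set set" where
  "normal_fan P = {F. \<exists>C\<in>normal_fan_max_cones P. F face_of C}"

end

theory Submission
  imports Defs
begin


lemma finite_eps:
  assumes "finite K" "\<forall>k\<in>K. \<exists>e>0. \<forall>\<tau>::real. \<bar>\<tau>\<bar> < e \<longrightarrow> P k \<tau>"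
  shows "\<exists>e>0. \<forall>\<tau>. \<bar>\<tau>\<bar> < e \<longrightarrow> (\<forall>k\<in>K. P k \<tau>)"
  using assms
proof (induction K rule: finite_induct)
  case empty then show ?case by (auto intro: exI[of _ 1])
next
  case (insert k K)
  then obtain e1 where e1: "e1>0" "\<forall>\<tau>. \<bar>\<tau>\<bar> < e1 \<longrightarrow> (\<forall>k\<in>K. P k \<tau>)" by auto
  from insert obtain e2 where e2: "e2>0" "\<forall>\<tau>. \<bar>\<tau>\<bar> < e2 \<longrightarrow> P k \<tau>" by auto
  show ?case using e1 e2 by (intro exI[of _ "min e1 e2"]) auto
qed

locale pfam =
  fixes K :: "'k set" and a :: "'k \<Rightarrow> 'a::euclidean_space" and b g :: "'k \<Rightarrow> real"
  assumes finK: "finite K"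
begin

definition Pl :: "real \<Rightarrow> 'a set" where
  "Pl t = {x. \<forall>k\<in>K. a k \<bullet> x \<le> b k + t * g k}"

definition act :: "real \<Rightarrow> 'a \<Rightarrow> 'k set" where
  "act t x = {k\<in>K. a k \<bullet> x = b k + t * g k}"

definition spans :: "'k set \<Rightarrow> bool" where
  "spans T = (\<forall>d. (\<forall>k\<in>T. a k \<bullet> d = 0) \<longrightarrow> d = 0)"

definition TC :: "'k set \<Rightarrow> 'a set" where
  "TC T = {d. \<forall>k\<in>T. a k \<bullet> d \<le> 0}"

lemma step_in:
  assumes x: "x \<in> Pl t" and d: "\<forall>k\<in>act t x. a k \<bullet> d \<le> 0"
  shows "\<exists>e>0. \<forall>\<tau>. \<bar>\<tau>\<bar> < e \<longrightarrow> 0 \<le> \<tau> \<longrightarrow> x + \<tau> *\<^sub>R d \<in> Pl t"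
proof -
  have "\<forall>k\<in>K. \<exists>e>0. \<forall>\<tau>::real. \<bar>\<tau>\<bar> < e \<longrightarrow> (0 \<le> \<tau> \<longrightarrow> a k \<bullet> (x + \<tau> *\<^sub>R d) \<le> b k + t * g k)"
  proof
    fix k assume k: "k \<in> K"
    show "\<exists>e>0. \<forall>\<tau>::real. \<bar>\<tau>\<bar> < e \<longrightarrow> (0 \<le> \<tau> \<longrightarrow> a k \<bullet> (x + \<tau> *\<^sub>R d) \<le> b k + t * g k)"
    proof (cases "k \<in> act t x")
      case True
      then have "a k \<bullet> x = b k + t * g k" "a k \<bullet> d \<le> 0" using d by (auto simp: act_def)
      then show ?thesis
        by (intro exI[of _ 1]) (auto simp: inner_right_distrib mult_nonneg_nonpos)
    next
      case False
      with k x have sl: "a k \<bullet> x < b k + t * g k" by (auto simp: act_def Pl_def order_le_less)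
      define e where "e = (b k + t * g k - a k \<bullet> x) / (\<bar>a k \<bullet> d\<bar> + 1)"
      have e: "e > 0" using sl by (simp add: e_def)
      show ?thesis
      proof (intro exI[of _ e] conjI allI impI e)
        fix \<tau> :: real assume "\<bar>\<tau>\<bar> < e" "0 \<le> \<tau>"
        then have "\<tau> * \<bar>a k \<bullet> d\<bar> \<le> e * \<bar>a k \<bullet> d\<bar>" by (simp add: mult_right_mono)
        also have "\<dots> < b k + t * g k - a k \<bullet> x"
          using sl unfolding e_def by (simp add: field_simps)
        finally have lt: "\<tau> * \<bar>a k \<bullet> d\<bar> < b k + t * g k - a k \<bullet> x" .
        have "\<tau> * (a k \<bullet> d) \<le> \<tau> * \<bar>a k \<bullet> d\<bar>"
          using \<open>0 \<le> \<tau>\<close> by (intro mult_left_mono) simp_all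
        with lt have "\<tau> * (a k \<bullet> d) < b k + t * g k - a k \<bullet> x" by linarith
        then show "a k \<bullet> (x + \<tau> *\<^sub>R d) \<le> b k + t * g k"
          by (simp add: inner_right_distrib)
      qed
    qed
  qed
  from finite_eps[OF finK this] obtain e where "e>0"
    "\<forall>\<tau>. \<bar>\<tau>\<bar> < e \<longrightarrow> (\<forall>k\<in>K. 0 \<le> \<tau> \<longrightarrow> a k \<bullet> (x + \<tau> *\<^sub>R d) \<le> b k + t * g k)" by blast
  then show ?thesis by (auto simp: Pl_def)
qed

lemma tangent_cone:
  assumes x: "x \<in> Pl t"
  shows "convex_cone hull ((\<lambda>y. y - x) ` Pl t) = TC (act t x)"
proof
  have "convex_cone (TC (act t x))"
  proof -
    have "TC (act t x) = \<Inter> ((\<lambda>k. {d. a k \<bullet> d \<le> 0}) ` act t x) \<inter> UNIV" by (auto simp: TC_def)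
    moreover have "convex_cone (\<Inter> (((\<lambda>k. {d. a k \<bullet> d \<le> 0}) ` act t x) \<union> {UNIV}))"
      by (rule convex_cone_Inter) (auto simp: convex_cone_iff inner_right_distrib mult_nonneg_nonpos)
    ultimately show ?thesis by (simp add: Int_commute)
  qed
  moreover have "(\<lambda>y. y - x) ` Pl t \<subseteq> TC (act t x)"
    using x by (auto simp: TC_def act_def Pl_def inner_diff_right)
  ultimately show "convex_cone hull ((\<lambda>y. y - x) ` Pl t) \<subseteq> TC (act t x)"
    by (metis hull_minimal)
next
  show "TC (act t x) \<subseteq> convex_cone hull ((\<lambda>y. y - x) ` Pl t)"
  proof
    fix d assume "d \<in> TC (act t x)"
    then have "\<forall>k\<in>act t x. a k \<bullet> d \<le> 0" by (simp add: TC_def)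
    from step_in[OF x this] obtain e where e: "e>0" "\<forall>\<tau>. \<bar>\<tau>\<bar> < e \<longrightarrow> 0 \<le> \<tau> \<longrightarrow> x + \<tau> *\<^sub>R d \<in> Pl t"
      by blast
    then have "x + (e/2) *\<^sub>R d \<in> Pl t" by auto
    then have "(e/2) *\<^sub>R d \<in> convex_cone hull ((\<lambda>y. y - x) ` Pl t)"
      by (intro hull_inc) (auto intro: image_eqI[of _ _ "x + (e/2) *\<^sub>R d"])
    from convex_cone_hull_mul[OF this, of "2/e"] e show "d \<in> convex_cone hull ((\<lambda>y. y - x) ` Pl t)"
      by simp
  qed
qed

lemma extreme_iff:
  "x extreme_point_of Pl t \<longleftrightarrow> x \<in> Pl t \<and> spans (act t x)"
proof
  assume ex: "x extreme_point_of Pl t"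
  then have x: "x \<in> Pl t" by (simp add: extreme_point_of_def)
  show "x \<in> Pl t \<and> spans (act t x)"
  proof (rule ccontr)
    assume "\<not> ?thesis"
    with x obtain d where d: "\<forall>k\<in>act t x. a k \<bullet> d = 0" "d \<noteq> 0" by (auto simp: spans_def)
    obtain e1 where e1: "e1>0" "\<forall>\<tau>. \<bar>\<tau>\<bar> < e1 \<longrightarrow> 0 \<le> \<tau> \<longrightarrow> x + \<tau> *\<^sub>R d \<in> Pl t"
      using step_in[OF x, of d] d by auto
    obtain e2 where e2: "e2>0" "\<forall>\<tau>. \<bar>\<tau>\<bar> < e2 \<longrightarrow> 0 \<le> \<tau> \<longrightarrow> x + \<tau> *\<^sub>R (-d) \<in> Pl t"
      using step_in[OF x, of "-d"] d by auto
    define e where "e = min e1 e2 / 2"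
    have e: "e > 0" "e < e1" "e < e2" using e1 e2 by (auto simp: e_def)
    have p1: "x + e *\<^sub>R d \<in> Pl t" and p2: "x - e *\<^sub>R d \<in> Pl t"
      using e1(2)[rule_format, of e] e2(2)[rule_format, of e] e by auto
    have "x \<in> open_segment (x - e *\<^sub>R d) (x + e *\<^sub>R d)"
    proof -
      have "x = (1 - 1/2) *\<^sub>R (x - e *\<^sub>R d) + (1/2) *\<^sub>R (x + e *\<^sub>R d)"
        by (simp add: algebra_simps scaleR_2[symmetric])
      moreover have "x - e *\<^sub>R d \<noteq> x + e *\<^sub>R d"
      proof
        assume "x - e *\<^sub>R d = x + e *\<^sub>R d"
        then have "e *\<^sub>R d + e *\<^sub>R d = 0" by (simp add: algebra_simps)
        then have "(2*e) *\<^sub>R d = 0" by (metis scaleR_2 scaleR_scaleR)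
        with e d show False by simp
      qed
      ultimately show ?thesis unfolding in_segment
        by (intro conjI exI[of _ "1/2"]) simp_all
    qed
    with ex p1 p2 show False by (auto simp: extreme_point_of_def)
  qed
next
  assume H: "x \<in> Pl t \<and> spans (act t x)"
  show "x extreme_point_of Pl t"
    unfolding extreme_point_of_def
  proof (intro conjI ballI)
    show "x \<in> Pl t" using H by simp
    fix p q assume p: "p \<in> Pl t" and q: "q \<in> Pl t"
    show "x \<notin> open_segment p q"
    proof
      assume "x \<in> open_segment p q"
      then obtain u where u: "0 < u" "u < 1" "x = (1 - u) *\<^sub>R p + u *\<^sub>R q" "p \<noteq> q"
        by (auto simp: in_segment)
      have "\<forall>k\<in>act t x. a k \<bullet> (q - p) = 0"
      proof
        fix k assume k: "k \<in> act t x"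
        then have kK: "k \<in> K" and ex: "a k \<bullet> x = b k + t * g k" by (auto simp: act_def)
        have pk: "a k \<bullet> p \<le> b k + t * g k" and qk: "a k \<bullet> q \<le> b k + t * g k"
          using p q kK by (auto simp: Pl_def)
        have cx: "a k \<bullet> x = (1 - u) * (a k \<bullet> p) + u * (a k \<bullet> q)"
          using u by (simp add: inner_add_right)
        define B where "B = b k + t * g k"
        have s0: "(1-u)*(B - a k \<bullet> p) + u*(B - a k \<bullet> q) = 0"
          using cx ex unfolding B_def by (simp add: algebra_simps)
        have n1: "(1-u)*(B - a k \<bullet> p) \<ge> 0" using u pk unfolding B_def by simp
        have n2: "u*(B - a k \<bullet> q) \<ge> 0" using u qk unfolding B_def by simp
        have "(1-u)*(B - a k \<bullet> p) = 0" "u*(B - a k \<bullet> q) = 0" using s0 n1 n2 by linarith+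
        then have "a k \<bullet> p = b k + t * g k \<and> a k \<bullet> q = b k + t * g k"
          using u unfolding B_def by simp
        then show "a k \<bullet> (q - p) = 0" by (simp add: inner_diff_right)
      qed
      then have "q - p = 0" using H by (auto simp: spans_def)
      with u show False by simp
    qed
  qed
qed


lemma spans_mono: "spans T \<Longrightarrow> T \<subseteq> T' \<Longrightarrow> spans T'"
  unfolding spans_def by blast

lemma act_subset: "act t x \<subseteq> K" by (auto simp: act_def)

lemma uniq:
  assumes "spans T" "T \<subseteq> act t x" "T \<subseteq> act t y"
  shows "x = y"
proof -
  have "\<forall>k\<in>T. a k \<bullet> (x - y) = 0"
  proof
    fix k assume "k \<in> T"
    then have "a k \<bullet> x = b k + t * g k" "a k \<bullet> y = b k + t * g k" using assms(2,3) by (auto simp: act_def)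
    then show "a k \<bullet> (x - y) = 0" by (simp add: inner_diff_right)
  qed
  then have "x - y = 0" using assms(1) by (auto simp: spans_def)
  then show ?thesis by simp
qed

lemma finite_V: "finite {x. x extreme_point_of Pl 1}"
proof -
  have "inj_on (act 1) {x. x extreme_point_of Pl 1}"
    by (rule inj_onI) (metis extreme_iff mem_Collect_eq order_refl uniq)
  moreover have "act 1 ` {x. x extreme_point_of Pl 1} \<subseteq> Pow K" using act_subset by auto
  ultimately show ?thesis using finK
    by (meson finite_Pow_iff finite_imageD finite_subset)
qed

lemma partA:
  assumes v: "v \<in> Pl 1" and w: "\<forall>k\<in>act 1 v. a k \<bullet> w = g k"
  shows "\<exists>e>0. \<forall>\<tau>. \<bar>\<tau>\<bar> < e \<longrightarrow> v + \<tau> *\<^sub>R w \<in> Pl (1+\<tau>) \<and> act (1+\<tau>) (v + \<tau> *\<^sub>R w) = act 1 v"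
proof -
  have "\<forall>k\<in>K. \<exists>e>0. \<forall>\<tau>::real. \<bar>\<tau>\<bar> < e \<longrightarrow>
     (a k \<bullet> (v + \<tau> *\<^sub>R w) \<le> b k + (1+\<tau>) * g k \<and>
      (a k \<bullet> (v + \<tau> *\<^sub>R w) = b k + (1+\<tau>) * g k \<longleftrightarrow> k \<in> act 1 v))"
  proof
    fix k assume k: "k \<in> K"
    show "\<exists>e>0. \<forall>\<tau>::real. \<bar>\<tau>\<bar> < e \<longrightarrow>
     (a k \<bullet> (v + \<tau> *\<^sub>R w) \<le> b k + (1+\<tau>) * g k \<and>
      (a k \<bullet> (v + \<tau> *\<^sub>R w) = b k + (1+\<tau>) * g k \<longleftrightarrow> k \<in> act 1 v))"
    proof (cases "k \<in> act 1 v")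
      case True
      then have "a k \<bullet> v = b k + g k" "a k \<bullet> w = g k" using w by (auto simp: act_def)
      then show ?thesis using True
        by (intro exI[of _ 1]) (auto simp: inner_right_distrib algebra_simps)
    next
      case False
      with k v have sl: "a k \<bullet> v < b k + g k" by (auto simp: act_def Pl_def order_le_less)
      define e where "e = (b k + g k - a k \<bullet> v) / (\<bar>a k \<bullet> w\<bar> + \<bar>g k\<bar> + 1)"
      have e: "e > 0" using sl by (simp add: e_def add_pos_nonneg)
      show ?thesis
      proof (intro exI[of _ e] conjI allI impI e)
        fix \<tau> :: real assume "\<bar>\<tau>\<bar> < e"
        then have "\<bar>\<tau>\<bar> * (\<bar>a k \<bullet> w\<bar> + \<bar>g k\<bar>) \<le> e * (\<bar>a k \<bullet> w\<bar> + \<bar>g k\<bar>)" by (simp add: mult_right_mono)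
        also have "\<dots> < b k + g k - a k \<bullet> v"
          using sl unfolding e_def by (simp add: field_simps)
        finally have lt: "\<bar>\<tau>\<bar> * (\<bar>a k \<bullet> w\<bar> + \<bar>g k\<bar>) < b k + g k - a k \<bullet> v" .
        have "\<tau> * (a k \<bullet> w - g k) \<le> \<bar>\<tau>\<bar> * (\<bar>a k \<bullet> w\<bar> + \<bar>g k\<bar>)"
        proof -
          have "\<tau> * (a k \<bullet> w - g k) \<le> \<bar>\<tau> * (a k \<bullet> w - g k)\<bar>" by (rule abs_ge_self)
          also have "\<dots> = \<bar>\<tau>\<bar> * \<bar>a k \<bullet> w - g k\<bar>" by (rule abs_mult)
          also have "\<dots> \<le> \<bar>\<tau>\<bar> * (\<bar>a k \<bullet> w\<bar> + \<bar>g k\<bar>)" by (intro mult_left_mono) auto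
          finally show ?thesis .
        qed
        with lt have "a k \<bullet> (v + \<tau> *\<^sub>R w) < b k + (1+\<tau>) * g k"
          by (simp add: inner_right_distrib algebra_simps)
        then show "a k \<bullet> (v + \<tau> *\<^sub>R w) \<le> b k + (1+\<tau>) * g k"
          "(a k \<bullet> (v + \<tau> *\<^sub>R w) = b k + (1+\<tau>) * g k) = (k \<in> act 1 v)"
          using False by auto
      qed
    qed
  qed
  from finite_eps[OF finK this] obtain e where "e>0" and
    H: "\<forall>\<tau>. \<bar>\<tau>\<bar> < e \<longrightarrow> (\<forall>k\<in>K. a k \<bullet> (v + \<tau> *\<^sub>R w) \<le> b k + (1+\<tau>) * g k \<and>
      (a k \<bullet> (v + \<tau> *\<^sub>R w) = b k + (1+\<tau>) * g k \<longleftrightarrow> k \<in> act 1 v))" by blast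
  show ?thesis
  proof (intro exI[of _ e] conjI allI impI \<open>e>0\<close>)
    fix \<tau> :: real assume "\<bar>\<tau>\<bar> < e"
    with H have H': "\<forall>k\<in>K. a k \<bullet> (v + \<tau> *\<^sub>R w) \<le> b k + (1+\<tau>) * g k \<and>
      (a k \<bullet> (v + \<tau> *\<^sub>R w) = b k + (1+\<tau>) * g k \<longleftrightarrow> k \<in> act 1 v)" by blast
    then show "v + \<tau> *\<^sub>R w \<in> Pl (1 + \<tau>)" by (auto simp: Pl_def)
    show "act (1 + \<tau>) (v + \<tau> *\<^sub>R w) = act 1 v"
      using H' act_subset[of 1 v] unfolding act_def[of "1+\<tau>"] by auto
  qed
qed

lemma partB:
  assumes bnd: "\<forall>t x. x \<in> Pl t \<longrightarrow> norm x \<le> R"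
    and T: "T \<subseteq> K" and no: "\<not> (\<exists>x\<in>Pl 1. T \<subseteq> act 1 x)"
  shows "\<exists>e>0. \<forall>\<tau>. \<bar>\<tau>\<bar> < e \<longrightarrow> \<not> (\<exists>x\<in>Pl (1+\<tau>). T \<subseteq> act (1+\<tau>) x)"
proof -
  define f where "f x = (\<Sum>k\<in>K. max 0 (a k \<bullet> x - b k - g k)) + (\<Sum>k\<in>T. \<bar>a k \<bullet> x - b k - g k\<bar>)" for x
  have fT: "finite T" using T finK finite_subset by blast
  have cont: "continuous_on (cball 0 (max R 0)) f"
    unfolding f_def by (intro continuous_intros)
  obtain x0 where x0: "x0 \<in> cball 0 (max R 0)" "\<forall>y\<in>cball 0 (max R 0). f x0 \<le> f y"
  proof -
    have "cball (0::'a) (max R 0) \<noteq> {}" by (simp add: cball_eq_empty)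
    from continuous_attains_inf[OF compact_cball this cont] show ?thesis using that by blast
  qed
  have f0: "f x0 > 0"
  proof -
    have n1: "(\<Sum>k\<in>K. max 0 (a k \<bullet> x0 - b k - g k)) \<ge> 0" by (simp add: sum_nonneg)
    have n2: "(\<Sum>k\<in>T. \<bar>a k \<bullet> x0 - b k - g k\<bar>) \<ge> 0" by (simp add: sum_nonneg)
    have "f x0 \<noteq> 0"
    proof
      assume "f x0 = 0"
      then have z1: "(\<Sum>k\<in>K. max 0 (a k \<bullet> x0 - b k - g k)) = 0"
        and z2: "(\<Sum>k\<in>T. \<bar>a k \<bullet> x0 - b k - g k\<bar>) = 0" using n1 n2 unfolding f_def by linarith+
      have "\<forall>k\<in>K. max 0 (a k \<bullet> x0 - b k - g k) = 0"
        using z1 by (subst (asm) sum_nonneg_eq_0_iff[OF finK]) auto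
      then have "x0 \<in> Pl 1" unfolding Pl_def
      proof (safe)
        fix k assume "\<forall>k\<in>K. max 0 (a k \<bullet> x0 - b k - g k) = 0" "k \<in> K"
        then have "max 0 (a k \<bullet> x0 - b k - g k) = 0" by blast
        then have "a k \<bullet> x0 - b k - g k \<le> 0" by (metis max.cobounded2)
        then show "a k \<bullet> x0 \<le> b k + 1 * g k" by simp
      qed
      moreover have "\<forall>k\<in>T. \<bar>a k \<bullet> x0 - b k - g k\<bar> = 0"
        using z2 by (subst (asm) sum_nonneg_eq_0_iff[OF fT]) auto
      then have "T \<subseteq> act 1 x0" using T by (auto simp: act_def)
      ultimately show False using no by blast
    qed
    with n1 n2 show ?thesis unfolding f_def by linarith
  qed
  define G where "G = (\<Sum>k\<in>K. \<bar>g k\<bar>) + (\<Sum>k\<in>T. \<bar>g k\<bar>)"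
  have G0: "G \<ge> 0" by (simp add: G_def sum_nonneg)
  define e where "e = f x0 / (G + 1)"
  have e: "e > 0" using f0 G0 by (simp add: e_def)
  show ?thesis
  proof (intro exI[of _ e] conjI allI impI e notI)
    fix \<tau> :: real assume te: "\<bar>\<tau>\<bar> < e" and "\<exists>x\<in>Pl (1 + \<tau>). T \<subseteq> act (1 + \<tau>) x"
    then obtain x where x: "x \<in> Pl (1+\<tau>)" "T \<subseteq> act (1+\<tau>) x" by blast
    have "norm x \<le> R" using bnd x(1) by blast
    then have "x \<in> cball 0 (max R 0)" by simp
    then have ge: "f x0 \<le> f x" using x0 by blast
    have le1: "(\<Sum>k\<in>K. max 0 (a k \<bullet> x - b k - g k)) \<le> (\<Sum>k\<in>K. \<bar>\<tau>\<bar> * \<bar>g k\<bar>)"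
    proof (rule sum_mono)
      fix k assume "k \<in> K"
      then have "a k \<bullet> x \<le> b k + (1+\<tau>) * g k" using x by (auto simp: Pl_def)
      then have "a k \<bullet> x - b k - g k \<le> \<tau> * g k" by (simp add: algebra_simps)
      also have "\<dots> \<le> \<bar>\<tau>\<bar> * \<bar>g k\<bar>" by (metis abs_ge_self abs_mult)
      finally show "max 0 (a k \<bullet> x - b k - g k) \<le> \<bar>\<tau>\<bar> * \<bar>g k\<bar>" by simp
    qed
    have le2: "(\<Sum>k\<in>T. \<bar>a k \<bullet> x - b k - g k\<bar>) \<le> (\<Sum>k\<in>T. \<bar>\<tau>\<bar> * \<bar>g k\<bar>)"
    proof (rule sum_mono)
      fix k assume "k \<in> T"
      then have "a k \<bullet> x = b k + (1+\<tau>) * g k" using x by (auto simp: act_def)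
      then show "\<bar>a k \<bullet> x - b k - g k\<bar> \<le> \<bar>\<tau>\<bar> * \<bar>g k\<bar>" by (simp add: algebra_simps abs_mult)
    qed
    have "f x \<le> \<bar>\<tau>\<bar> * G" using le1 le2 unfolding f_def G_def
      by (simp add: sum_distrib_left distrib_left)
    also have "\<dots> \<le> \<bar>\<tau>\<bar> * (G + 1)" by (simp add: mult_left_mono)
    also have "\<dots> < e * (G + 1)" using te G0 by (simp add: mult_strict_right_mono)
    also have "\<dots> = f x0" using G0 by (simp add: e_def)
    finally show False using ge by simp
  qed
qed


lemma max_cones_eq:
  "normal_fan_max_cones (Pl s) = (\<lambda>A. dual_cone (TC A)) ` {act s x |x. x extreme_point_of Pl s}"
proof -
  have "\<And>x. x extreme_point_of Pl s \<Longrightarrow> convex_cone hull ((\<lambda>y. y - x) ` Pl s) = TC (act s x)"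
    by (rule tangent_cone) (simp add: extreme_point_of_def)
  then have "(\<lambda>v. dual_cone (convex_cone hull ((\<lambda>x. x - v) ` Pl s))) ` {v. v extreme_point_of Pl s}
     = (\<lambda>v. dual_cone (TC (act s v))) ` {v. v extreme_point_of Pl s}"
    by (intro image_cong) auto
  moreover have "{act s x |x. x extreme_point_of Pl s} = act s ` {v. v extreme_point_of Pl s}"
    by (simp add: setcompr_eq_image)
  ultimately show ?thesis unfolding normal_fan_max_cones_def setcompr_eq_image
    by (simp add: image_image)
qed

lemma main_general:
  assumes bnd: "\<forall>t x. x \<in> Pl t \<longrightarrow> norm x \<le> R"
    and cons: "\<forall>v. v extreme_point_of Pl 1 \<longrightarrow> (\<exists>w. \<forall>k\<in>act 1 v. a k \<bullet> w = g k)"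
  shows "\<exists>\<epsilon>>0. \<forall>t. \<bar>t - 1\<bar> < \<epsilon> \<longrightarrow> normal_fan (Pl t) = normal_fan (Pl 1)"
proof -
  define V where "V = {x. x extreme_point_of Pl 1}"
  define W where "W v = (SOME w. \<forall>k\<in>act 1 v. a k \<bullet> w = g k)" for v
  have W: "\<forall>k\<in>act 1 v. a k \<bullet> W v = g k" if "v \<in> V" for v
  proof -
    from that cons obtain w where "\<forall>k\<in>act 1 v. a k \<bullet> w = g k" unfolding V_def by blast
    then show ?thesis unfolding W_def by (rule someI)
  qed
  have "\<forall>v\<in>V. \<exists>e>0. \<forall>\<tau>. \<bar>\<tau>\<bar> < e \<longrightarrow> v + \<tau> *\<^sub>R W v \<in> Pl (1+\<tau>) \<and> act (1+\<tau>) (v + \<tau> *\<^sub>R W v) = act 1 v"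
  proof
    fix v assume v: "v \<in> V"
    then have "v \<in> Pl 1" by (simp add: V_def extreme_point_of_def)
    from partA[OF this W[OF v]] show "\<exists>e>0. \<forall>\<tau>. \<bar>\<tau>\<bar> < e \<longrightarrow> v + \<tau> *\<^sub>R W v \<in> Pl (1+\<tau>) \<and> act (1+\<tau>) (v + \<tau> *\<^sub>R W v) = act 1 v" .
  qed
  from finite_eps[OF finite_V[folded V_def] this] obtain eA where eA: "eA > 0"
    "\<forall>\<tau>. \<bar>\<tau>\<bar> < eA \<longrightarrow> (\<forall>v\<in>V. v + \<tau> *\<^sub>R W v \<in> Pl (1+\<tau>) \<and> act (1+\<tau>) (v + \<tau> *\<^sub>R W v) = act 1 v)"
    by blast
  have "\<forall>T\<in>Pow K. \<exists>e>0. \<forall>\<tau>. \<bar>\<tau>\<bar> < e \<longrightarrow> (\<not> (\<exists>x\<in>Pl 1. T \<subseteq> act 1 x) \<longrightarrow> \<not> (\<exists>x\<in>Pl (1+\<tau>). T \<subseteq> act (1+\<tau>) x))"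
  proof
    fix T assume T: "T \<in> Pow K"
    show "\<exists>e>0. \<forall>\<tau>. \<bar>\<tau>\<bar> < e \<longrightarrow> (\<not> (\<exists>x\<in>Pl 1. T \<subseteq> act 1 x) \<longrightarrow> \<not> (\<exists>x\<in>Pl (1+\<tau>). T \<subseteq> act (1+\<tau>) x))"
    proof (cases "\<exists>x\<in>Pl 1. T \<subseteq> act 1 x")
      case True then show ?thesis by (intro exI[of _ 1]) auto
    next
      case False
      from partB[OF bnd _ False] T obtain e where "e>0" "\<forall>\<tau>. \<bar>\<tau>\<bar> < e \<longrightarrow> \<not> (\<exists>x\<in>Pl (1+\<tau>). T \<subseteq> act (1+\<tau>) x)"
        by blast
      then show ?thesis by blast
    qed
  qed
  from finite_eps[OF _ this] finK obtain eB where eB: "eB > 0"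
    "\<forall>\<tau>. \<bar>\<tau>\<bar> < eB \<longrightarrow> (\<forall>T\<in>Pow K. \<not> (\<exists>x\<in>Pl 1. T \<subseteq> act 1 x) \<longrightarrow> \<not> (\<exists>x\<in>Pl (1+\<tau>). T \<subseteq> act (1+\<tau>) x))"
    by blast
  show ?thesis
  proof (intro exI[of _ "min eA eB"] conjI allI impI)
    show "min eA eB > 0" using eA eB by simp
    fix t assume "\<bar>t - 1\<bar> < min eA eB"
    define \<tau> where "\<tau> = t - 1"
    have "\<bar>\<tau>\<bar> < eA" "\<bar>\<tau>\<bar> < eB" using \<open>\<bar>t - 1\<bar> < min eA eB\<close> by (simp_all add: \<tau>_def)
    note HA0 = eA(2)[rule_format, OF this(1)] and HB0 = eB(2)[rule_format, OF this(2)]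
    have t': "1 + \<tau> = t" by (simp add: \<tau>_def)
    have HA: "\<forall>v\<in>V. v + \<tau> *\<^sub>R W v \<in> Pl t \<and> act t (v + \<tau> *\<^sub>R W v) = act 1 v"
      using HA0 unfolding t' by blast
    have HB: "\<forall>T\<in>Pow K. \<not> (\<exists>x\<in>Pl 1. T \<subseteq> act 1 x) \<longrightarrow> \<not> (\<exists>x\<in>Pl t. T \<subseteq> act t x)"
      using HB0 unfolding t' by blast
    have C: "{act t x |x. x extreme_point_of Pl t} = {act 1 x |x. x extreme_point_of Pl 1}"
    proof
      show "{act 1 x |x. x extreme_point_of Pl 1} \<subseteq> {act t x |x. x extreme_point_of Pl t}"
      proof clarify
        fix v assume v: "v extreme_point_of Pl 1"
        then have vV: "v \<in> V" by (simp add: V_def)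
        have sp: "spans (act 1 v)" using v extreme_iff by blast
        have h: "v + \<tau> *\<^sub>R W v \<in> Pl t" "act t (v + \<tau> *\<^sub>R W v) = act 1 v" using HA vV by blast+
        have "(v + \<tau> *\<^sub>R W v) extreme_point_of Pl t"
          using h sp extreme_iff by simp
        moreover have "act 1 v = act t (v + \<tau> *\<^sub>R W v)" using h by simp
        ultimately show "\<exists>x. act 1 v = act t x \<and> x extreme_point_of Pl t" by blast
      qed
    next
      show "{act t x |x. x extreme_point_of Pl t} \<subseteq> {act 1 x |x. x extreme_point_of Pl 1}"
      proof clarify
        fix x assume x: "x extreme_point_of Pl t"
        then have xP: "x \<in> Pl t" and sp: "spans (act t x)" using extreme_iff by blast+
        have "act t x \<in> Pow K" using act_subset by auto
        with HB xP have "\<exists>y\<in>Pl 1. act t x \<subseteq> act 1 y" by blast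
        then obtain y where y: "y \<in> Pl 1" "act t x \<subseteq> act 1 y" by blast
        have yV: "y \<in> V" unfolding V_def using extreme_iff y spans_mono[OF sp y(2)] by blast
        have eq: "act t (y + \<tau> *\<^sub>R W y) = act 1 y" using HA yV by blast
        have "x = y + \<tau> *\<^sub>R W y"
          by (rule uniq[OF sp, of t]) (use y(2) eq in auto)
        then have "act t x = act 1 y" using eq by simp
        moreover have "y extreme_point_of Pl 1" using yV by (simp add: V_def)
        ultimately show "\<exists>y. act t x = act 1 y \<and> y extreme_point_of Pl 1" by blast
      qed
    qed
    show "normal_fan (Pl t) = normal_fan (Pl 1)"
      unfolding normal_fan_def max_cones_eq C ..
  qed
qed

end



definition l1 :: "'a::euclidean_space \<Rightarrow> real" where
  "l1 x = (\<Sum>i\<in>Basis. \<bar>x \<bullet> i\<bar>)"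

definition SV :: "'a::euclidean_space set" where
  "SV = {s. \<forall>i\<in>Basis. s \<bullet> i = 1 \<or> s \<bullet> i = -1}"

lemma coord_sum:
  fixes f :: "'a::euclidean_space \<Rightarrow> real"
  assumes "i \<in> Basis"
  shows "(\<Sum>j\<in>Basis. f j *\<^sub>R j) \<bullet> i = f i"
  using assms by (simp add: inner_sum_left inner_Basis if_distrib cong: if_cong)

lemma SV_finite: "finite (SV :: 'a::euclidean_space set)"
proof -
  have "(SV::'a set) \<subseteq> (\<lambda>f. \<Sum>i\<in>Basis. f i *\<^sub>R i) ` (Basis \<rightarrow>\<^sub>E {-1, 1::real})"
  proof
    fix s :: 'a assume s: "s \<in> SV"
    have "s = (\<Sum>i\<in>Basis. (restrict (\<lambda>i. s \<bullet> i) Basis) i *\<^sub>R i)"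
      by (simp add: euclidean_representation)
    moreover have "restrict (\<lambda>i. s \<bullet> i) Basis \<in> Basis \<rightarrow>\<^sub>E {-1, 1}"
      using s by (auto simp: SV_def)
    ultimately show "s \<in> (\<lambda>f. \<Sum>i\<in>Basis. f i *\<^sub>R i) ` (Basis \<rightarrow>\<^sub>E {-1, 1::real})" by blast
  qed
  moreover have "finite (Basis \<rightarrow>\<^sub>E {-1, 1::real})" by (intro finite_PiE) auto
  ultimately show ?thesis using finite_subset by blast
qed

lemma SV_le: "s \<in> SV \<Longrightarrow> s \<bullet> x \<le> l1 x"
  unfolding l1_def euclidean_inner[of s x]
proof (rule sum_mono)
  fix i :: 'a assume "s \<in> SV" "i \<in> Basis"
  then have "s \<bullet> i = 1 \<or> s \<bullet> i = -1" by (auto simp: SV_def)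
  then show "(s \<bullet> i) * (x \<bullet> i) \<le> \<bar>x \<bullet> i\<bar>" by auto
qed

lemma SV_ex: "\<exists>s\<in>SV. s \<bullet> x = l1 x"
proof
  define s :: 'a where "s = (\<Sum>j\<in>Basis. (if x \<bullet> j \<ge> 0 then 1 else -1) *\<^sub>R j)"
  have si: "s \<bullet> i = (if x \<bullet> i \<ge> 0 then 1 else -1)" if "i \<in> Basis" for i
    unfolding s_def using coord_sum[OF that, of "\<lambda>j. if x \<bullet> j \<ge> 0 then 1 else -1"] by simp
  then show "s \<in> SV" by (auto simp: SV_def)
  show "s \<bullet> x = l1 x" unfolding l1_def euclidean_inner[of s x]
    by (rule sum.cong) (auto simp: si)
qed

lemma l1_le_iff: "l1 x \<le> c \<longleftrightarrow> (\<forall>s\<in>SV. s \<bullet> x \<le> c)"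
  using SV_le SV_ex by (metis order_trans)

lemma SV_eq:
  assumes "s \<in> SV" "s \<bullet> x = l1 x" "i \<in> Basis"
  shows "(s \<bullet> i) * (x \<bullet> i) = \<bar>x \<bullet> i\<bar>"
proof -
  have nn: "\<forall>j\<in>Basis. \<bar>x \<bullet> j\<bar> - (s \<bullet> j) * (x \<bullet> j) \<ge> 0"
    using assms(1) by (auto simp: SV_def)
  have "(\<Sum>j\<in>Basis. \<bar>x \<bullet> j\<bar> - (s \<bullet> j) * (x \<bullet> j)) = 0"
    using assms(2) unfolding l1_def euclidean_inner[of s x] by (simp add: sum_subtractf)
  then have "\<forall>j\<in>Basis. \<bar>x \<bullet> j\<bar> - (s \<bullet> j) * (x \<bullet> j) = 0"
    using nn by (subst (asm) sum_nonneg_eq_0_iff) auto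
  with assms(3) show ?thesis by auto
qed

lemma SV_sq: "s \<in> SV \<Longrightarrow> i \<in> Basis \<Longrightarrow> (s \<bullet> i) * (s \<bullet> i) = 1"
  by (auto simp: SV_def)

lemma SV_nonzero: "s \<in> (SV::'a::euclidean_space set) \<Longrightarrow> s \<noteq> 0"
proof
  assume "s \<in> SV" "s = 0"
  obtain i :: 'a where "i \<in> Basis" using nonempty_Basis by blast
  with \<open>s \<in> SV\<close> \<open>s = 0\<close> show False by (auto simp: SV_def)
qed


lemma l1_nonneg: "l1 x \<ge> 0" by (simp add: l1_def sum_nonneg)

lemma sum_ind: "finite A \<Longrightarrow> (\<Sum>i\<in>A. if P i then (c::real) else 0) = c * card {i\<in>A. P i}"
  by (simp add: sum.inter_filter[symmetric])

lemma consistency: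
  fixes v z :: "'a::euclidean_space"
  assumes v1: "l1 v \<le> 1" and v2: "l1 (v - z) \<le> 1" and z2: "l1 z < 2"
  shows "\<exists>w. (\<forall>s\<in>SV. s \<bullet> v = 1 \<longrightarrow> s \<bullet> w = 0) \<and> (\<forall>s\<in>SV. s \<bullet> v = 1 + s \<bullet> z \<longrightarrow> s \<bullet> w = s \<bullet> z)"
proof (cases "l1 v < 1 \<or> l1 (v - z) < 1")
  case True
  then show ?thesis
  proof
    assume "l1 v < 1"
    then show ?thesis using SV_le[of _ v] by (intro exI[of _ z]) force
  next
    assume "l1 (v - z) < 1"
    then have "\<forall>s\<in>SV. s \<bullet> v \<noteq> 1 + s \<bullet> z" using SV_le[of _ "v - z"] by (force simp: inner_diff_right)
    then show ?thesis by (intro exI[of _ 0]) auto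
  qed
next
  case False
  then have lv: "l1 v = 1" and lvz: "l1 (v - z) = 1" using v1 v2 by auto
  define \<sigma> where "\<sigma> i = sgn (v \<bullet> i)" for i :: 'a
  define \<tau> where "\<tau> i = sgn (v \<bullet> i - z \<bullet> i)" for i :: 'a
  define E where "E = {i\<in>Basis. v \<bullet> i \<noteq> 0 \<and> v \<bullet> i \<noteq> z \<bullet> i \<and> \<sigma> i = \<tau> i}"
  define B where "B = {i\<in>Basis. v \<bullet> i \<noteq> 0 \<and> v \<bullet> i \<noteq> z \<bullet> i \<and> \<sigma> i \<noteq> \<tau> i}"
  define \<alpha> where "\<alpha> = (\<Sum>i\<in>Basis. if v \<bullet> i \<noteq> 0 \<and> v \<bullet> i = z \<bullet> i then \<bar>v \<bullet> i\<bar> else 0)"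
  define \<beta> where "\<beta> = (\<Sum>i\<in>Basis. \<tau> i * (z \<bullet> i))"
  define c where "c = (\<beta> - \<alpha>) / (2 * card E)"
  define d where "d = - (\<alpha> + \<beta>) / (2 * card B)"
  define \<omega> where "\<omega> i = (if v \<bullet> i = 0 then 0 else if v \<bullet> i = z \<bullet> i then z \<bullet> i
      else if \<sigma> i = \<tau> i then \<sigma> i * c else \<sigma> i * d)" for i
  define w :: 'a where "w = (\<Sum>i\<in>Basis. \<omega> i *\<^sub>R i)"
  have wi: "w \<bullet> i = \<omega> i" if "i \<in> Basis" for i using coord_sum[OF that] by (simp add: w_def)
  have E_ne: "E \<noteq> {}"
  proof
    assume E0: "E = {}"
    have "\<bar>z \<bullet> i\<bar> = \<bar>v \<bullet> i\<bar> + \<bar>v \<bullet> i - z \<bullet> i\<bar>" if "i \<in> Basis" for i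
    proof -
      have "i \<notin> E" using E0 by simp
      with that show ?thesis unfolding E_def \<sigma>_def \<tau>_def
        by (auto simp: sgn_if abs_if split: if_splits)
    qed
    then have "l1 z = l1 v + l1 (v - z)" unfolding l1_def
      by (simp add: sum.distrib[symmetric] inner_diff_left)
    with lv lvz z2 show False by simp
  qed
  have cardE: "card E > 0" using E_ne by (simp add: E_def card_gt_0_iff)
  have B0: "\<alpha> + \<beta> = 0" if "B = {}"
  proof -
    have "\<bar>v \<bullet> i\<bar> - \<bar>v \<bullet> i - z \<bullet> i\<bar> = (if v \<bullet> i \<noteq> 0 \<and> v \<bullet> i = z \<bullet> i then \<bar>v \<bullet> i\<bar> else 0) + \<tau> i * (z \<bullet> i)"
      if "i \<in> Basis" for i
    proof -
      have "i \<notin> B" using \<open>B = {}\<close> by simp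
      with that show ?thesis unfolding B_def \<sigma>_def \<tau>_def
        by (auto simp: sgn_if abs_if split: if_splits)
    qed
    then have "l1 v - l1 (v - z) = \<alpha> + \<beta>" unfolding l1_def \<alpha>_def \<beta>_def
      by (simp add: sum_subtractf[symmetric] sum.distrib[symmetric] inner_diff_left)
    with lv lvz show ?thesis by simp
  qed
  have cE: "c * card E = (\<beta> - \<alpha>) / 2" using cardE by (simp add: c_def)
  have dB: "d * card B = - (\<alpha> + \<beta>) / 2"
  proof (cases "B = {}")
    case True then show ?thesis using B0 by simp
  next
    case False
    then have "card B > 0" by (simp add: B_def card_gt_0_iff)
    then show ?thesis by (simp add: d_def)
  qed
  have fE: "finite E" "finite B" by (simp_all add: E_def B_def)
  show ?thesis
  proof (intro exI[of _ w] conjI ballI impI)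
    fix s :: 'a assume s: "s \<in> SV" and sv: "s \<bullet> v = 1"
    have eq: "(s \<bullet> i) * (v \<bullet> i) = \<bar>v \<bullet> i\<bar>" if "i \<in> Basis" for i
      using SV_eq[OF s _ that] sv lv by simp
    have pm: "s \<bullet> i = 1 \<or> s \<bullet> i = -1" if "i \<in> Basis" for i using s that by (auto simp: SV_def)
    have "(s \<bullet> i) * (w \<bullet> i) = (if v \<bullet> i \<noteq> 0 \<and> v \<bullet> i = z \<bullet> i then \<bar>v \<bullet> i\<bar> else 0)
        + (if i \<in> E then c else 0) + (if i \<in> B then d else 0)" if "i \<in> Basis" for i
      using eq[OF that] pm[OF that] that unfolding wi[OF that] \<omega>_def E_def B_def \<sigma>_def \<tau>_def
      by (auto simp: sgn_if abs_if split: if_splits)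
    then have "s \<bullet> w = \<alpha> + c * card {i\<in>Basis. i \<in> E} + d * card {i\<in>Basis. i \<in> B}"
      unfolding euclidean_inner[of s w] \<alpha>_def
      by (simp add: sum.distrib sum_ind)
    moreover have "{i\<in>Basis. i \<in> E} = E" "{i\<in>Basis. i \<in> B} = B" by (auto simp: E_def B_def)
    ultimately show "s \<bullet> w = 0" using cE dB by (simp add: field_simps)
  next
    fix s :: 'a assume s: "s \<in> SV" and sv: "s \<bullet> v = 1 + s \<bullet> z"
    have "s \<bullet> (v - z) = 1" using sv by (simp add: inner_diff_right)
    then have eq: "(s \<bullet> i) * (v \<bullet> i - z \<bullet> i) = \<bar>v \<bullet> i - z \<bullet> i\<bar>" if "i \<in> Basis" for i
      using SV_eq[OF s _ that, of "v - z"] lvz by (simp add: inner_diff_left)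
    have pm: "s \<bullet> i = 1 \<or> s \<bullet> i = -1" if "i \<in> Basis" for i using s that by (auto simp: SV_def)
    have "(s \<bullet> i) * (w \<bullet> i - z \<bullet> i) = - (\<tau> i * (z \<bullet> i))
        + (if i \<in> E then c else 0) - (if i \<in> B then d else 0)" if "i \<in> Basis" for i
      using eq[OF that] pm[OF that] that unfolding wi[OF that] \<omega>_def E_def B_def \<sigma>_def \<tau>_def
      by (auto simp: sgn_if abs_if split: if_splits)
    then have "s \<bullet> (w - z) = - \<beta> + c * card {i\<in>Basis. i \<in> E} - d * card {i\<in>Basis. i \<in> B}"
      unfolding euclidean_inner[of s "w - z"] \<beta>_def
      by (simp add: sum.distrib sum_subtractf sum_negf sum_ind inner_diff_left)
    moreover have "{i\<in>Basis. i \<in> E} = E" "{i\<in>Basis. i \<in> B} = B" by (auto simp: E_def B_def)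
    ultimately show "s \<bullet> w = s \<bullet> z" using cE dB by (simp add: inner_diff_right field_simps)
  qed
qed




lemma l1_Basis: "b \<in> Basis \<Longrightarrow> l1 b = 1"
  unfolding l1_def by (simp add: inner_Basis if_distrib cong: if_cong)

lemma l1_minus: "l1 (-x) = l1 x" by (simp add: l1_def)

lemma l1_ball_convex: "convex {x::'a::euclidean_space. l1 x \<le> 1}"
proof -
  have "{x::'a. l1 x \<le> 1} = (\<Inter>s\<in>SV. {x. s \<bullet> x \<le> 1})" using l1_le_iff by auto
  then show ?thesis by (simp add: convex_INT convex_halfspace_le)
qed

lemma cross_polytope_l1: "(cross_polytope::'a::euclidean_space set) = {x. l1 x \<le> 1}"
proof
  show "cross_polytope \<subseteq> {x::'a. l1 x \<le> 1}"
    unfolding cross_polytope_def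
    by (rule hull_minimal) (auto simp: l1_Basis l1_minus l1_ball_convex)
next
  show "{x::'a. l1 x \<le> 1} \<subseteq> cross_polytope"
  proof
    fix x :: 'a assume x: "x \<in> {x. l1 x \<le> 1}"
    define H where "H = convex hull (Basis \<union> uminus ` (Basis::'a set))"
    have cH: "convex H" by (simp add: H_def)
    obtain b :: 'a where b: "b \<in> Basis" using nonempty_Basis by blast
    have bH: "b \<in> H" "-b \<in> H" using b by (auto simp: H_def intro: hull_inc)
    have "(1/2) *\<^sub>R b + (1/2) *\<^sub>R (-b) \<in> H" by (rule convexD[OF cH bH]) auto
    then have zH: "0 \<in> H" by simp
    define u where "u i = (if x \<bullet> i \<ge> 0 then i else -i)" for i :: 'a
    have uH: "u i \<in> H" if "i \<in> Basis" for i using that by (auto simp: u_def H_def intro: hull_inc)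
    have xu: "(\<Sum>i\<in>Basis. \<bar>x \<bullet> i\<bar> *\<^sub>R u i) = x"
    proof -
      have "(\<Sum>i\<in>Basis. \<bar>x \<bullet> i\<bar> *\<^sub>R u i) = (\<Sum>i\<in>Basis. (x \<bullet> i) *\<^sub>R i)"
        by (rule sum.cong) (auto simp: u_def)
      then show ?thesis by (simp add: euclidean_representation)
    qed
    show "x \<in> cross_polytope"
    proof (cases "l1 x = 0")
      case True
      then have "\<forall>i\<in>Basis. x \<bullet> i = 0" unfolding l1_def
        by (subst (asm) sum_nonneg_eq_0_iff) auto
      then have "x = 0" by (metis euclidean_all_zero_iff)
      then show ?thesis using zH by (simp add: cross_polytope_def H_def)
    next
      case False
      then have lp: "l1 x > 0" using l1_nonneg[of x] by simp
      have s1: "(\<Sum>i\<in>Basis. \<bar>x \<bullet> i\<bar> / l1 x) = 1"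
      proof -
        have "(\<Sum>i\<in>Basis. \<bar>x \<bullet> i\<bar> / l1 x) = (\<Sum>i\<in>Basis. \<bar>x \<bullet> i\<bar>) / l1 x"
          by (rule sum_divide_distrib[symmetric])
        also have "\<dots> = 1" using lp by (simp add: l1_def)
        finally show ?thesis .
      qed
      have "(\<Sum>i\<in>Basis. (\<bar>x \<bullet> i\<bar> / l1 x) *\<^sub>R u i) \<in> H"
        by (rule convex_sum[OF finite_Basis cH s1]) (use lp in \<open>auto intro: uH\<close>)
      moreover have "(\<Sum>i\<in>Basis. (\<bar>x \<bullet> i\<bar> / l1 x) *\<^sub>R u i) = (1 / l1 x) *\<^sub>R (\<Sum>i\<in>Basis. \<bar>x \<bullet> i\<bar> *\<^sub>R u i)"
        by (simp add: scaleR_sum_right)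
      then have "(\<Sum>i\<in>Basis. (\<bar>x \<bullet> i\<bar> / l1 x) *\<^sub>R u i) = (1 / l1 x) *\<^sub>R x"
        by (simp only: xu)
      ultimately have y: "(1 / l1 x) *\<^sub>R x \<in> H" by simp
      have "l1 x *\<^sub>R ((1 / l1 x) *\<^sub>R x) + (1 - l1 x) *\<^sub>R 0 \<in> H"
        by (rule convexD[OF cH y zH]) (use x lp in auto)
      then show ?thesis using lp by (simp add: cross_polytope_def H_def)
    qed
  qed
qed

lemma translate_l1:
  "(\<lambda>x. c + x) ` (cross_polytope::'a::euclidean_space set) = {x. l1 (x - c) \<le> 1}"
proof -
  have "x \<in> (\<lambda>x. c + x) ` {y::'a. l1 y \<le> 1} \<longleftrightarrow> l1 (x - c) \<le> 1" for x
  proof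
    assume "x \<in> (\<lambda>x. c + x) ` {y::'a. l1 y \<le> 1}"
    then obtain y where "l1 y \<le> 1" "x = c + y" by blast
    then show "l1 (x - c) \<le> 1" by simp
  next
    assume "l1 (x - c) \<le> 1"
    then have "x - c \<in> {y::'a. l1 y \<le> 1}" by simp
    moreover have "x = c + (x - c)" by simp
    ultimately show "x \<in> (\<lambda>x. c + x) ` {y::'a. l1 y \<le> 1}" by (rule rev_image_eqI)
  qed
  then show ?thesis unfolding cross_polytope_l1 by blast
qed



lemma l1_interior:
  fixes x c :: "'a::euclidean_space"
  assumes e: "e > 0" and sub: "ball x e \<subseteq> {y. l1 (y - c) \<le> 1}"
  shows "l1 (x - c) < 1"
proof -
  obtain s where s: "s \<in> SV" "s \<bullet> (x - c) = l1 (x - c)" using SV_ex by blast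
  have ns: "norm s > 0" using SV_nonzero[OF s(1)] by simp
  define \<delta> where "\<delta> = e / (2 * norm s)"
  have d: "\<delta> > 0" using e ns by (simp add: \<delta>_def)
  have "dist x (x + \<delta> *\<^sub>R s) = \<delta> * norm s" using d by (simp add: dist_norm)
  also have "\<dots> = e / 2" using ns by (simp add: \<delta>_def)
  finally have "x + \<delta> *\<^sub>R s \<in> ball x e" using e by simp
  with sub have "l1 (x + \<delta> *\<^sub>R s - c) \<le> 1" by blast
  then have "s \<bullet> (x + \<delta> *\<^sub>R s - c) \<le> 1" using SV_le[OF s(1)] order_trans by blast
  moreover have "s \<bullet> (x + \<delta> *\<^sub>R s - c) = l1 (x - c) + \<delta> * (norm s)^2"
    using s(2) by (simp add: inner_diff_right inner_add_right power2_norm_eq_inner algebra_simps)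
  moreover have "\<delta> * (norm s)^2 > 0" using d ns by simp
  ultimately show ?thesis by linarith
qed

lemma l1_tri: "l1 z \<le> l1 x + l1 (x - z)"
  unfolding l1_def by (simp add: sum.distrib[symmetric] inner_diff_left sum_mono abs_triangle_ineq4)

lemma fulldim_l1:
  fixes z :: "'a::euclidean_space"
  assumes "aff_dim (cross_polytope \<inter> ((\<lambda>x. z + x) ` cross_polytope)) = int DIM('a)"
  shows "l1 z < 2"
proof -
  define S where "S = cross_polytope \<inter> ((\<lambda>x. z + x) ` (cross_polytope::'a set))"
  have S: "S = {x. l1 x \<le> 1} \<inter> {x. l1 (x - z) \<le> 1}"
    by (simp add: S_def cross_polytope_l1[symmetric] translate_l1)
  have cS: "convex S"
  proof -
    have "convex {x::'a. l1 (x - z) \<le> 1}"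
      using translate_l1[of z] convex_translation[of cross_polytope z]
      by (simp add: cross_polytope_def)
    then show ?thesis using l1_ball_convex unfolding S by (intro convex_Int)
  qed
  have aff: "affine hull S = UNIV" using assms aff_dim_eq_full unfolding S_def by blast
  have "S \<noteq> {}" using assms unfolding S_def[symmetric] by auto
  then have "rel_interior S \<noteq> {}" using rel_interior_eq_empty[OF cS] by simp
  then obtain x where "x \<in> interior S" using rel_interior_interior[OF aff] by auto
  then obtain e where e: "e > 0" "ball x e \<subseteq> S" using mem_interior by blast
  have "l1 (x - 0) < 1" by (rule l1_interior[OF e(1)]) (use e(2) S in auto)
  moreover have "l1 (x - z) < 1" by (rule l1_interior[OF e(1)]) (use e(2) S in auto)
  ultimately show ?thesis using l1_tri[of z x] by simp
qed




theorem lemma6p5: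
  fixes z :: "'a::euclidean_space"
  assumes "aff_dim (cross_polytope \<inter> ((\<lambda>x. z + x) ` cross_polytope)) = int DIM('a)"
  shows "\<exists>\<epsilon>>0. \<forall>t::real. 1 - \<epsilon> < t \<and> t < 1 + \<epsilon> \<longrightarrow>
           normal_fan (cross_polytope \<inter> ((\<lambda>x. t *\<^sub>R z + x) ` cross_polytope))
         = normal_fan (cross_polytope \<inter> ((\<lambda>x. z + x) ` cross_polytope))"
proof -
  define K where "K = (SV::'a set) \<times> (UNIV::bool set)"
  define g where "g = (\<lambda>(s::'a, c::bool). if c then s \<bullet> z else 0)"
  have fK: "finite K" unfolding K_def by (intro finite_cartesian_product SV_finite) simp
  interpret P: pfam K fst "\<lambda>_. 1" g by unfold_locales (rule fK)
  have Pl_eq: "cross_polytope \<inter> ((\<lambda>x. t *\<^sub>R z + x) ` cross_polytope) = P.Pl t" for t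
  proof -
    have "x \<in> P.Pl t \<longleftrightarrow> (\<forall>s\<in>SV. s \<bullet> x \<le> 1) \<and> (\<forall>s\<in>SV. s \<bullet> (x - t *\<^sub>R z) \<le> 1)" for x
    proof -
      have "x \<in> P.Pl t \<longleftrightarrow> (\<forall>s\<in>SV. \<forall>c. s \<bullet> x \<le> 1 + t * (if c then s \<bullet> z else 0))"
        unfolding P.Pl_def unfolding K_def g_def by auto
      also have "\<dots> \<longleftrightarrow> (\<forall>s\<in>SV. s \<bullet> x \<le> 1) \<and> (\<forall>s\<in>SV. s \<bullet> (x - t *\<^sub>R z) \<le> 1)"
      proof -
        have "(\<forall>c. s \<bullet> x \<le> 1 + t * (if c then s \<bullet> z else 0)) \<longleftrightarrow> s \<bullet> x \<le> 1 \<and> s \<bullet> (x - t *\<^sub>R z) \<le> 1" for s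
        proof -
          have "(\<forall>c. s \<bullet> x \<le> 1 + t * (if c then s \<bullet> z else 0)) \<longleftrightarrow> s \<bullet> x \<le> 1 + t * 0 \<and> s \<bullet> x \<le> 1 + t * (s \<bullet> z)"
            by (metis (full_types))
          then show ?thesis by (simp add: inner_diff_right) linarith
        qed
        then show ?thesis by blast
      qed
      finally show ?thesis .
    qed
    note iff = this
    have e1: "cross_polytope \<inter> ((\<lambda>x. t *\<^sub>R z + x) ` cross_polytope) = {x. l1 x \<le> 1} \<inter> {x. l1 (x - t *\<^sub>R z) \<le> 1}"
      by (simp only: translate_l1) (simp add: cross_polytope_l1)
    show ?thesis
    proof (rule set_eqI)
      fix x
      show "x \<in> cross_polytope \<inter> ((\<lambda>x. t *\<^sub>R z + x) ` cross_polytope) \<longleftrightarrow> x \<in> P.Pl t"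
        unfolding e1 iff by (simp add: l1_le_iff)
    qed
  qed
  have bnd: "\<forall>t x. x \<in> P.Pl t \<longrightarrow> norm x \<le> 1"
  proof (intro allI impI)
    fix t x assume "x \<in> P.Pl t"
    then have "x \<in> cross_polytope" using Pl_eq[of t] by blast
    then have "l1 x \<le> 1" by (simp add: cross_polytope_l1)
    then show "norm x \<le> 1" using norm_le_l1[of x] unfolding l1_def by linarith
  qed
  have z2: "l1 z < 2" by (rule fulldim_l1[OF assms])
  have cons: "\<forall>v. v extreme_point_of P.Pl 1 \<longrightarrow> (\<exists>w. \<forall>k\<in>P.act 1 v. fst k \<bullet> w = g k)"
  proof (intro allI impI)
    fix v assume "v extreme_point_of P.Pl 1"
    then have "v \<in> P.Pl 1" by (simp add: extreme_point_of_def)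
    then have "v \<in> cross_polytope \<inter> ((\<lambda>x. 1 *\<^sub>R z + x) ` cross_polytope)" using Pl_eq[of 1] by blast
    then have v1: "l1 v \<le> 1" and v2: "l1 (v - z) \<le> 1"
      by (simp_all only: translate_l1) (simp_all add: cross_polytope_l1)
    obtain w where w: "\<forall>s\<in>SV. s \<bullet> v = 1 \<longrightarrow> s \<bullet> w = 0" "\<forall>s\<in>SV. s \<bullet> v = 1 + s \<bullet> z \<longrightarrow> s \<bullet> w = s \<bullet> z"
      using consistency[OF v1 v2 z2] by blast
    show "\<exists>w. \<forall>k\<in>P.act 1 v. fst k \<bullet> w = g k"
    proof (intro exI[of _ w] ballI)
      fix k assume "k \<in> P.act 1 v"
      then obtain s c where k: "k = (s, c)" "s \<in> SV" "s \<bullet> v = 1 + (if c then s \<bullet> z else 0)"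
        unfolding P.act_def unfolding K_def g_def by auto
      show "fst k \<bullet> w = g k"
      proof (cases c)
        case True then show ?thesis using k w(2) by (simp add: g_def)
      next
        case False then show ?thesis using k w(1) by (simp add: g_def)
      qed
    qed
  qed
  obtain e where e: "e > 0" "\<forall>t. \<bar>t - 1\<bar> < e \<longrightarrow> normal_fan (P.Pl t) = normal_fan (P.Pl 1)"
    using P.main_general[OF bnd cons] by blast
  show ?thesis
  proof (intro exI[of _ e] conjI allI impI e(1))
    fix t :: real assume "1 - e < t \<and> t < 1 + e"
    then have "\<bar>t - 1\<bar> < e" by auto
    then have "normal_fan (P.Pl t) = normal_fan (P.Pl 1)" using e(2) by blast
    moreover have "cross_polytope \<inter> ((\<lambda>x. z + x) ` cross_polytope) = P.Pl 1"
      using Pl_eq[of 1] by simp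
    ultimately show "normal_fan (cross_polytope \<inter> ((\<lambda>x. t *\<^sub>R z + x) ` cross_polytope))
         = normal_fan (cross_polytope \<inter> ((\<lambda>x. z + x) ` cross_polytope))"
      using Pl_eq[of t] by simp
  qed
qed


end
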